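(* Fix $\mathbf p\in\mathbb{Z}^2\setminus\{\mathbf0\}$, a positive integer $N$ and $\mathbf a\in\mathcal D$ with $|\mathbf a|<|\mathbf p|$ and $\mathbf a\pm\mathbf p\in\mathcal D$, and suppose $n\ge3$ and $|\widehat{\mathbf a+k\mathbf p}|>|\mathbf p|$ for $k=1,2,\dots,n-1$. If $\lambda^\dagger=\sqrt{-\rho_1(\rho_0+\rho_2)}$ is a positive real number, then there exist real numbers $\lambda_1,\lambda_2>\lambda^\dagger$ such that $\lambda_1$ is an eigenvalue of the Galerkin class matrix $A$ and $\lambda_2$ is an eigenvalue of the Zeitlin class matrix $A'$. Similarly, if $\lambda^\dagger=\sqrt{-\rho_{n-1}(\rho_0+\rho_{n-2})}$ is a positive real number, then there exist real $\lambda_1,\lambda_2>\lambda^\dagger$ with $\lambda_1$ an eigenvalue of $A$ and $\lambda_2$ an eigenvalue of $A'$.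
   Context: $\mathcal D=[-N,N]^2\cap\mathbb{Z}^2$; for $\mathbf k\in\mathbb{Z}^2$, $\widehat{\mathbf k}$ is the unique element of $\mathcal D$ with $\mathbf k-\widehat{\mathbf k}\in(2N+1)\mathbb{Z}^2$. $n=|\{\widehat{\mathbf a+k\mathbf p}:k\in\mathbb{Z}\}|$; $\widehat{\mathbf a+k\mathbf p}$ depends only on $k$ mod $n$. $\rho_k=\frac1{|\mathbf p|^2}-\frac1{|\widehat{\mathbf a+k\mathbf p}|^2}$ for $k\in\mathbb{Z}$. Zeitlin class matrix: $A'$ is $n\times n$, indexed by $0,\dots,n-1$ mod $n$, with $(A')_{j,j+1}=\rho_{j+1}$, $(A')_{j,j-1}=-\rho_{j-1}$ (indices mod $n$), other entries zero. Galerkin class matrix: let $\{k\in\mathbb{Z}:\mathbf a+k\mathbf p\in\mathcal D\}=\{-m_1,\dots,m_2\}$; $A$ is the square matrix indexed by $-m_1,\dots,m_2$ with $A_{j,j+1}=\rho_{j+1}$, $A_{j,j-1}=-\rho_{j-1}$ and all other entries zero (no wrap-around). These are, up to a scalar factor, the linearisations restricted to one class of the Zeitlin sine truncation and of the Galerkin truncation of the 2D Euler equations on the torus about the equilibrium whose only nonzero Fourier coefficients sit at $\pm\mathbf p$. *)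

theory Defs
  imports Complex_Main "Jordan_Normal_Form.Char_Poly"
begin

definition Dom :: "int \<Rightarrow> (int \<times> int) set" where
  "Dom N = {(x, y). \<bar>x\<bar> \<le> N \<and> \<bar>y\<bar> \<le> N}"

text \<open>hat k: the unique element of D congruent to k modulo (2N+1)Z^2.\<close>
definition hat :: "int \<Rightarrow> int \<times> int \<Rightarrow> int \<times> int" where
  "hat N k = ((fst k + N) mod (2*N+1) - N, (snd k + N) mod (2*N+1) - N)"

definition nsq :: "int \<times> int \<Rightarrow> real" where
  "nsq k = real_of_int (fst k ^ 2 + snd k ^ 2)"

definition lpt :: "int \<times> int \<Rightarrow> int \<Rightarrow> int \<times> int \<Rightarrow> int \<times> int" where
  "lpt a k p = (fst a + k * fst p, snd a + k * snd p)"

definition ncls :: "int \<Rightarrow> int \<times> int \<Rightarrow> int \<times> int \<Rightarrow> nat" where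
  "ncls N a p = card {hat N (lpt a k p) | k. True}"

definition rho :: "int \<Rightarrow> int \<times> int \<Rightarrow> int \<times> int \<Rightarrow> int \<Rightarrow> real" where
  "rho N a p k = 1 / nsq p - 1 / nsq (hat N (lpt a k p))"

definition zeitlin_mat :: "int \<Rightarrow> int \<times> int \<Rightarrow> int \<times> int \<Rightarrow> real mat" where
  "zeitlin_mat N a p = (let n = ncls N a p in
     mat n n (\<lambda>(i, j).
       if j = (i + 1) mod n then rho N a p (int i + 1)
       else if j = (i + n - 1) mod n then - rho N a p (int i - 1)
       else 0))"

text \<open>{k. a + k p \<in> D} = {-m1..m2}.\<close>
definition gal_m1 :: "int \<Rightarrow> int \<times> int \<Rightarrow> int \<times> int \<Rightarrow> int" where
  "gal_m1 N a p = - Min {k. lpt a k p \<in> Dom N}"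

definition gal_m2 :: "int \<Rightarrow> int \<times> int \<Rightarrow> int \<times> int \<Rightarrow> int" where
  "gal_m2 N a p = Max {k. lpt a k p \<in> Dom N}"

text \<open>Galerkin class matrix A, indexed by -m1..m2; row/column i of the
  Isabelle matrix corresponds to index i - m1.\<close>
definition galerkin_mat :: "int \<Rightarrow> int \<times> int \<Rightarrow> int \<times> int \<Rightarrow> real mat" where
  "galerkin_mat N a p = (let m1 = gal_m1 N a p; m2 = gal_m2 N a p;
       sz = nat (m1 + m2 + 1) in
     mat sz sz (\<lambda>(i, j).
       if j = i + 1 then rho N a p (int i - m1 + 1)
       else if i = j + 1 then - rho N a p (int i - m1 - 1)
       else 0))"

end

theory Submission
  imports Defs "HOL-Analysis.Function_Topology"
begin

definition Mv :: "nat \<Rightarrow> (nat \<Rightarrow> nat \<Rightarrow> real) \<Rightarrow> (nat \<Rightarrow> real) \<Rightarrow> nat \<Rightarrow> real" where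
  "Mv s M t j = (\<Sum>l<s. M j l * t l)"
definition NN :: "nat \<Rightarrow> (nat \<Rightarrow> nat \<Rightarrow> real) \<Rightarrow> (nat \<Rightarrow> real) \<Rightarrow> (nat \<Rightarrow> real) \<Rightarrow> real" where
  "NN s M \<sigma> t = (\<Sum>j<s. \<sigma> j * (Mv s M t j)^2)"
definition WW :: "nat \<Rightarrow> nat \<Rightarrow> (nat \<Rightarrow> real) \<Rightarrow> (nat \<Rightarrow> real) \<Rightarrow> real" where
  "WW s i0 \<sigma> t = (\<Sum>j\<in>{..<s}-{i0}. (t j)^2 / \<sigma> j)"
definition BB :: "nat \<Rightarrow> nat \<Rightarrow> (nat \<Rightarrow> nat \<Rightarrow> real) \<Rightarrow> (nat \<Rightarrow> real) \<Rightarrow> real \<Rightarrow> (nat \<Rightarrow> real) \<Rightarrow> (nat \<Rightarrow> real) \<Rightarrow> real" where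
  "BB s i0 M \<sigma> \<mu> t h = (\<Sum>j<s. \<sigma> j * Mv s M t j * Mv s M h j) + \<mu> * (\<Sum>j\<in>{..<s}-{i0}. t j * h j / \<sigma> j)"
definition supp :: "nat \<Rightarrow> nat \<Rightarrow> (nat \<Rightarrow> real) \<Rightarrow> bool" where
  "supp s i0 t = (\<forall>j. (s \<le> j \<or> j = i0) \<longrightarrow> t j = 0)"

lemma Mv_lin: "Mv s M (\<lambda>j. t j + e * h j) j = Mv s M t j + e * Mv s M h j"
  unfolding Mv_def by (simp add: algebra_simps sum.distrib sum_distrib_left)

lemma Mv_scale: "Mv s M (\<lambda>j. r * t j) j = r * Mv s M t j"
  unfolding Mv_def by (simp add: algebra_simps sum_distrib_left)

lemma quad_zero:
  fixes B C :: real
  assumes "\<And>e. 0 \<le> 2*e*B + e^2*C"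
  shows "B = 0"
proof -
  define d where "d = \<bar>C\<bar> + 1"
  have d: "d > 0" "C - 2*d < 0" unfolding d_def by auto
  have "0 \<le> 2*(-B/d)*B + (-B/d)^2*C" by (rule assms)
  also have "\<dots> = B^2 * (C - 2*d) / d^2" using d by (simp add: field_simps power2_eq_square)
  finally have "0 \<le> B^2 * (C - 2*d) / d^2" .
  hence "0 \<le> B^2 * (C - 2*d)" using d by (simp add: zero_le_divide_iff)
  hence "B^2 \<le> 0" using d by (auto simp: zero_le_mult_iff)
  thus ?thesis by simp
qed

lemma expand:
  "NN s M \<sigma> (\<lambda>j. t j + e * h j) + \<mu> * WW s i0 \<sigma> (\<lambda>j. t j + e * h j)
   = (NN s M \<sigma> t + \<mu> * WW s i0 \<sigma> t) + 2*e*BB s i0 M \<sigma> \<mu> t h + e^2 * (NN s M \<sigma> h + \<mu> * WW s i0 \<sigma> h)"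
proof -
  have 1: "NN s M \<sigma> (\<lambda>j. t j + e * h j) = NN s M \<sigma> t + 2*e*(\<Sum>j<s. \<sigma> j * Mv s M t j * Mv s M h j) + e^2 * NN s M \<sigma> h"
    unfolding NN_def Mv_lin
    by (simp add: sum.distrib sum_distrib_left power2_eq_square algebra_simps)
  have 2: "WW s i0 \<sigma> (\<lambda>j. t j + e * h j) = WW s i0 \<sigma> t + 2*e*(\<Sum>j\<in>{..<s}-{i0}. t j * h j / \<sigma> j) + e^2 * WW s i0 \<sigma> h"
    unfolding WW_def
    by (simp add: sum.distrib sum_distrib_left power2_eq_square algebra_simps add_divide_distrib)
  show ?thesis unfolding 1 2 BB_def by (simp add: algebra_simps)
qed

lemma supp_lin: "supp s i0 t \<Longrightarrow> supp s i0 h \<Longrightarrow> supp s i0 (\<lambda>j. t j + e * h j)"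
  unfolding supp_def by auto

lemma stat:
  assumes "\<And>t. supp s i0 t \<Longrightarrow> 0 \<le> NN s M \<sigma> t + \<mu> * WW s i0 \<sigma> t"
    and "supp s i0 z" "NN s M \<sigma> z + \<mu> * WW s i0 \<sigma> z = 0" "supp s i0 h"
  shows "BB s i0 M \<sigma> \<mu> z h = 0"
proof (rule quad_zero)
  fix e :: real
  have "0 \<le> NN s M \<sigma> (\<lambda>j. z j + e * h j) + \<mu> * WW s i0 \<sigma> (\<lambda>j. z j + e * h j)"
    using assms supp_lin by blast
  thus "0 \<le> 2 * e * BB s i0 M \<sigma> \<mu> z h + e\<^sup>2 * (NN s M \<sigma> h + \<mu> * WW s i0 \<sigma> h)"
    unfolding expand assms(3) by simp
qed

lemma NN_scale: "NN s M \<sigma> (\<lambda>j. r * t j) = r^2 * NN s M \<sigma> t"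
  unfolding NN_def Mv_scale by (simp add: sum_distrib_left power_mult_distrib algebra_simps)

lemma WW_scale: "WW s i0 \<sigma> (\<lambda>j. r * t j) = r^2 * WW s i0 \<sigma> t"
  unfolding WW_def by (simp add: sum_distrib_left power_mult_distrib algebra_simps)

lemma WW_nonneg:
  assumes "\<And>j. j<s \<Longrightarrow> j\<noteq>i0 \<Longrightarrow> \<sigma> j > 0"
  shows "0 \<le> WW s i0 \<sigma> t"
  unfolding WW_def using assms by (intro sum_nonneg) (auto intro!: divide_nonneg_pos)

lemma WW_zero:
  assumes "\<And>j. j<s \<Longrightarrow> j\<noteq>i0 \<Longrightarrow> \<sigma> j > 0" "supp s i0 t" "WW s i0 \<sigma> t = 0"
  shows "t j = 0"
proof (cases "j < s \<and> j \<noteq> i0")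
  case True
  have "\<forall>j\<in>{..<s}-{i0}. (t j)^2 / \<sigma> j = 0"
    using assms(3) unfolding WW_def
    by (subst sum_nonneg_eq_0_iff[symmetric]) (use assms(1) in \<open>auto intro!: divide_nonneg_pos\<close>)
  with True assms(1)[of j] show ?thesis by auto
next
  case False
  thus ?thesis using assms(2) unfolding supp_def by auto
qed

lemma term_le_WW:
  assumes "\<And>j. j<s \<Longrightarrow> j\<noteq>i0 \<Longrightarrow> \<sigma> j > 0" "j < s" "j \<noteq> i0"
  shows "(t j)^2 / \<sigma> j \<le> WW s i0 \<sigma> t"
  unfolding WW_def using assms
  by (intro member_le_sum) (auto intro!: divide_nonneg_pos)

lemma cont_WW: "continuous_on UNIV (WW s i0 \<sigma>)"
  unfolding WW_def divide_inverse by (intro continuous_intros continuous_on_product_coordinates)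

lemma cont_NN: "continuous_on UNIV (NN s M \<sigma>)"
  unfolding NN_def Mv_def by (intro continuous_intros continuous_on_product_coordinates)

lemma exists_min:
  assumes pos: "\<And>j. j<s \<Longrightarrow> j\<noteq>i0 \<Longrightarrow> \<sigma> j > 0"
    and t0: "supp s i0 t0" "WW s i0 \<sigma> t0 > 0"
  shows "\<exists>z \<mu>. supp s i0 z \<and> WW s i0 \<sigma> z = 1 \<and> NN s M \<sigma> z + \<mu> = 0 \<and>
     (\<forall>t. supp s i0 t \<longrightarrow> 0 \<le> NN s M \<sigma> t + \<mu> * WW s i0 \<sigma> t)"
proof -
  define K where "K = {t. supp s i0 t \<and> WW s i0 \<sigma> t = 1}"
  define S where "S = (\<lambda>j. if j < s \<and> j \<noteq> i0 then {-sqrt(\<sigma> j)..sqrt(\<sigma> j)} else {0::real})"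
  have cS: "compact (PiE UNIV S)"
  proof -
    have "compactin (product_topology (\<lambda>i. euclidean) UNIV) (PiE UNIV S)"
      unfolding compactin_PiE S_def by auto
    thus ?thesis unfolding euclidean_product_topology by simp
  qed
  have KS: "K \<subseteq> PiE UNIV S"
  proof
    fix t assume "t \<in> K"
    hence t: "supp s i0 t" "WW s i0 \<sigma> t = 1" unfolding K_def by auto
    show "t \<in> PiE UNIV S"
    proof (rule PiE_I)
      fix j
      show "t j \<in> S j"
      proof (cases "j < s \<and> j \<noteq> i0")
        case True
        have "(t j)^2 / \<sigma> j \<le> 1" using term_le_WW[of s i0 \<sigma> j t] pos True t by auto
        hence "(t j)^2 \<le> \<sigma> j" using pos[of j] True by (simp add: divide_le_eq)
        hence "\<bar>t j\<bar> \<le> sqrt (\<sigma> j)" using real_sqrt_le_mono by fastforce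
        thus ?thesis using True unfolding S_def by auto
      next
        case False
        thus ?thesis using t(1) unfolding supp_def S_def by auto
      qed
    qed auto
  qed
  have clK: "closed K"
  proof -
    have 1: "closed {t::nat\<Rightarrow>real. \<forall>j. (s \<le> j \<or> j = i0) \<longrightarrow> t j = 0}"
    proof (rule closed_Collect_all)
      fix j
      show "closed {t::nat\<Rightarrow>real. (s \<le> j \<or> j = i0) \<longrightarrow> t j = 0}"
      proof (cases "s \<le> j \<or> j = i0")
        case True
        thus ?thesis by (simp add: closed_Collect_eq continuous_on_product_coordinates)
      next
        case False
        thus ?thesis by simp
      qed
    qed
    have 2: "closed {t. WW s i0 \<sigma> t = 1}"
      by (rule closed_Collect_eq) (auto intro: cont_WW)
    have "K = {t::nat\<Rightarrow>real. \<forall>j. (s \<le> j \<or> j = i0) \<longrightarrow> t j = 0} \<inter> {t. WW s i0 \<sigma> t = 1}"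
      unfolding K_def supp_def by auto
    thus ?thesis using 1 2 by auto
  qed
  have cK: "compact K"
  proof -
    have "compact (PiE UNIV S \<inter> K)" using cS clK by (rule compact_Int_closed)
    moreover have "PiE UNIV S \<inter> K = K" using KS by auto
    ultimately show ?thesis by simp
  qed
  define r0 where "r0 = 1 / sqrt (WW s i0 \<sigma> t0)"
  have "WW s i0 \<sigma> (\<lambda>j. r0 * t0 j) = r0^2 * WW s i0 \<sigma> t0" by (rule WW_scale)
  also have "\<dots> = 1" using t0 unfolding r0_def by (simp add: power_divide)
  finally have "(\<lambda>j. r0 * t0 j) \<in> K"
    unfolding K_def using t0 unfolding supp_def by auto
  hence neK: "K \<noteq> {}" by auto
  obtain z where z: "z \<in> K" "\<And>y. y \<in> K \<Longrightarrow> NN s M \<sigma> z \<le> NN s M \<sigma> y"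
    using continuous_attains_inf[OF cK neK continuous_on_subset[OF cont_NN]] by blast
  define \<mu> where "\<mu> = - NN s M \<sigma> z"
  have "0 \<le> NN s M \<sigma> t + \<mu> * WW s i0 \<sigma> t" if t: "supp s i0 t" for t
  proof (cases "WW s i0 \<sigma> t = 0")
    case True
    have "\<And>j. t j = 0" using WW_zero[OF pos t True] .
    hence "NN s M \<sigma> t = 0" unfolding NN_def Mv_def by simp
    thus ?thesis using True by simp
  next
    case False
    hence Wp: "WW s i0 \<sigma> t > 0" using WW_nonneg[of s i0 \<sigma> t] pos by force
    define r where "r = 1 / sqrt (WW s i0 \<sigma> t)"
    have r2: "r^2 = 1 / WW s i0 \<sigma> t" using Wp unfolding r_def by (simp add: power_divide)
    have "WW s i0 \<sigma> (\<lambda>j. r * t j) = r^2 * WW s i0 \<sigma> t" by (rule WW_scale)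
    also have "\<dots> = 1" using Wp r2 by simp
    finally have "(\<lambda>j. r * t j) \<in> K"
      unfolding K_def using t unfolding supp_def by auto
    hence "NN s M \<sigma> z \<le> r^2 * NN s M \<sigma> t" using z(2) NN_scale by metis
    hence "- \<mu> \<le> NN s M \<sigma> t / WW s i0 \<sigma> t" unfolding r2 \<mu>_def by simp
    thus ?thesis using Wp by (simp add: divide_simps)
  qed
  moreover have "NN s M \<sigma> z + \<mu> = 0" unfolding \<mu>_def by simp
  ultimately show ?thesis using z(1) unfolding K_def by blast
qed

lemma skew_sum:
  assumes skew: "\<And>i j. i<s \<Longrightarrow> j<s \<Longrightarrow> M j i = - M i j"
  shows "(\<Sum>k<s. x k * Mv s M y k) = - (\<Sum>k<s. y k * Mv s M x k)"
proof -
  have "(\<Sum>k<s. x k * Mv s M y k) = (\<Sum>k<s. \<Sum>l<s. x k * M k l * y l)"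
    unfolding Mv_def by (simp add: sum_distrib_left mult.assoc)
  also have "\<dots> = (\<Sum>l<s. \<Sum>k<s. x k * M k l * y l)" by (rule sum.swap)
  also have "\<dots> = (\<Sum>l<s. - (y l * (\<Sum>k<s. M l k * x k)))"
  proof (rule sum.cong[OF refl])
    fix l assume l: "l \<in> {..<s}"
    have "(\<Sum>k<s. x k * M k l * y l) = (\<Sum>k<s. - (y l * (M l k * x k)))"
    proof (rule sum.cong[OF refl])
      fix k assume k: "k \<in> {..<s}"
      have "M k l = - M l k" using skew[of l k] k l by simp
      thus "x k * M k l * y l = - (y l * (M l k * x k))" by simp
    qed
    thus "(\<Sum>k<s. x k * M k l * y l) = - (y l * (\<Sum>k<s. M l k * x k))"
      by (simp add: sum_negf sum_distrib_left)
  qed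
  finally show ?thesis unfolding Mv_def by (simp add: sum_negf)
qed

lemma skew_zero:
  assumes skew: "\<And>i j. i<s \<Longrightarrow> j<s \<Longrightarrow> M j i = - M i j"
  shows "(\<Sum>k<s. x k * Mv s M x k) = 0"
  using skew_sum[of s M x x, OF skew] by simp

lemma Mv_delta: "k < s \<Longrightarrow> Mv s M (\<lambda>j. if j = k then 1 else 0) i = M i k"
  unfolding Mv_def by (simp add: if_distrib cong: if_cong)

lemma abstract_eig:
  fixes M :: "nat \<Rightarrow> nat \<Rightarrow> real" and \<sigma> :: "nat \<Rightarrow> real"
  assumes skew: "\<And>i j. i<s \<Longrightarrow> j<s \<Longrightarrow> M j i = - M i j"
    and i0: "i0 < s" "\<sigma> i0 < 0" and pos: "\<And>j. j<s \<Longrightarrow> j\<noteq>i0 \<Longrightarrow> \<sigma> j > 0"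
    and c: "c \<ge> 0"
    and t: "supp s i0 t" "NN s M \<sigma> t + c^2 * WW s i0 \<sigma> t \<le> 0"
    and h: "supp s i0 h" "BB s i0 M \<sigma> (c^2) t h \<noteq> 0"
  shows "\<exists>l>c. eigenvalue (mat s s (\<lambda>(i,j). M i j * \<sigma> j)) l"
proof -
  have Wt: "WW s i0 \<sigma> t > 0"
  proof (rule ccontr)
    assume "\<not> ?thesis"
    hence "WW s i0 \<sigma> t = 0" using WW_nonneg[of s i0 \<sigma> t] pos by force
    hence tz: "\<And>j. t j = 0" using WW_zero[of s i0 \<sigma> t] pos t(1) by blast
    hence "BB s i0 M \<sigma> (c^2) t h = 0" unfolding BB_def Mv_def by simp
    with h(2) show False by simp
  qed
  obtain z \<mu> where z: "supp s i0 z" "WW s i0 \<sigma> z = 1" "NN s M \<sigma> z + \<mu> = 0"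
    and mn: "\<And>t. supp s i0 t \<Longrightarrow> 0 \<le> NN s M \<sigma> t + \<mu> * WW s i0 \<sigma> t"
    using exists_min[of s i0 \<sigma> t M] pos t(1) Wt by blast
  have mt: "0 \<le> NN s M \<sigma> t + \<mu> * WW s i0 \<sigma> t" using mn t(1) .
  have "0 \<le> (\<mu> - c^2) * WW s i0 \<sigma> t" using mt t(2) by (simp add: algebra_simps)
  hence ge: "\<mu> \<ge> c^2" using Wt by (simp add: zero_le_mult_iff)
  have ne: "\<mu> \<noteq> c^2"
  proof
    assume eq: "\<mu> = c^2"
    have "NN s M \<sigma> t + \<mu> * WW s i0 \<sigma> t = 0" using mt t(2) eq by simp
    hence "BB s i0 M \<sigma> \<mu> t h = 0" using stat[of s i0 M \<sigma> \<mu> t h] mn t(1) h(1) by blast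
    thus False using h(2) eq by simp
  qed
  hence mc: "\<mu> > c^2" using ge by simp
  define l where "l = sqrt \<mu>"
  have cpos: "0 \<le> c^2" by simp
  have l: "l > c" "l^2 = \<mu>" "l > 0"
  proof -
    have "sqrt (c^2) < sqrt \<mu>" using mc by (rule real_sqrt_less_mono)
    thus "l > c" unfolding l_def using c by simp
    have mp: "\<mu> > 0" using mc cpos by linarith
    show "l^2 = \<mu>" unfolding l_def using mp by simp
    show "l > 0" unfolding l_def using mp by simp
  qed
  have sig0: "\<sigma> j \<noteq> 0" if "j < s" for j
    using pos[of j] i0 that by (cases "j = i0") auto
  have st: "(\<Sum>j<s. \<sigma> j * Mv s M z j * M j k) + \<mu> * (z k / \<sigma> k) = 0" if k: "k<s" "k\<noteq>i0" for k
  proof -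
    define ek where "ek = (\<lambda>j. if j = k then 1 else (0::real))"
    have sk: "supp s i0 ek" using k unfolding supp_def ek_def by auto
    have "NN s M \<sigma> z + \<mu> * WW s i0 \<sigma> z = 0" using z by simp
    hence "BB s i0 M \<sigma> \<mu> z ek = 0" using stat[of s i0 M \<sigma> \<mu> z ek] mn z(1) sk by blast
    moreover have "Mv s M ek j = M j k" for j unfolding ek_def using k(1) by (rule Mv_delta)
    moreover have "(\<Sum>j\<in>{..<s}-{i0}. z j * ek j / \<sigma> j) = z k / \<sigma> k"
    proof -
      have "(\<lambda>j. z j * ek j / \<sigma> j) = (\<lambda>j. if j = k then z k / \<sigma> k else 0)"
        by (auto simp: ek_def fun_eq_iff)
      hence e: "(\<Sum>j\<in>{..<s}-{i0}. z j * ek j / \<sigma> j) = (\<Sum>j\<in>{..<s}-{i0}. if j = k then z k / \<sigma> k else 0)"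
        by metis
      show ?thesis unfolding e using k by (simp add: sum.delta)
    qed
    ultimately show ?thesis unfolding BB_def by simp
  qed
  define q where "q j = \<sigma> j * Mv s M z j" for j
  have Mvz: "Mv s M z j = q j / \<sigma> j" if "j < s" for j
    using sig0[OF that] unfolding q_def by simp
  have Mq: "Mv s M q k = \<mu> * (z k / \<sigma> k)" if k: "k<s" "k\<noteq>i0" for k
  proof -
    have "Mv s M q k = (\<Sum>j<s. M k j * (\<sigma> j * Mv s M z j))" unfolding Mv_def q_def by simp
    also have "\<dots> = - (\<Sum>j<s. \<sigma> j * Mv s M z j * M j k)"
    proof -
      have "(\<Sum>j<s. M k j * (\<sigma> j * Mv s M z j)) = (\<Sum>j<s. - (\<sigma> j * Mv s M z j * M j k))"
      proof (rule sum.cong[OF refl])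
        fix j assume j: "j \<in> {..<s}"
        have "M k j = - M j k" using skew[of j k] k j by simp
        thus "M k j * (\<sigma> j * Mv s M z j) = - (\<sigma> j * Mv s M z j * M j k)" by simp
      qed
      thus ?thesis by (simp add: sum_negf)
    qed
    finally show ?thesis using st[OF k] by simp
  qed
  have zMz: "(\<Sum>k<s. z k * Mv s M z k) = 0" by (rule skew_zero[OF skew])
  have zi0: "z i0 = 0" using z(1) unfolding supp_def by simp
  have r0: "Mv s M q i0 = 0"
  proof -
    have A: "(\<Sum>k<s. q k * Mv s M q k) = 0" by (rule skew_zero[OF skew])
    have fin: "finite {..<s}" and i0m: "i0 \<in> {..<s}" using i0 by auto
    have B: "(\<Sum>k<s. q k * Mv s M q k) = q i0 * Mv s M q i0 + (\<Sum>k\<in>{..<s}-{i0}. q k * Mv s M q k)"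
      by (rule sum.remove[OF fin i0m])
    have "(\<Sum>k\<in>{..<s}-{i0}. q k * Mv s M q k) = \<mu> * (\<Sum>k\<in>{..<s}-{i0}. z k * Mv s M z k)"
      unfolding sum_distrib_left
      by (rule sum.cong) (auto simp: Mq Mvz sig0)
    also have "(\<Sum>k\<in>{..<s}-{i0}. z k * Mv s M z k) = 0"
      using sum.remove[OF fin i0m, of "\<lambda>k. z k * Mv s M z k"] zMz zi0 by simp
    finally have "q i0 * Mv s M q i0 = 0" using A B by simp
    moreover have "q i0 \<noteq> 0"
    proof
      assume "q i0 = 0"
      hence Mz0: "Mv s M z i0 = 0" using Mvz[OF i0(1)] by simp
      have "NN s M \<sigma> z = \<sigma> i0 * (Mv s M z i0)^2 + (\<Sum>j\<in>{..<s}-{i0}. \<sigma> j * (Mv s M z j)^2)"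
        unfolding NN_def by (rule sum.remove[OF fin i0m])
      also have "\<dots> \<ge> 0" unfolding Mz0
      proof -
        have "0 \<le> (\<Sum>j\<in>{..<s}-{i0}. \<sigma> j * (Mv s M z j)^2)"
        proof (rule sum_nonneg)
          fix j assume "j \<in> {..<s}-{i0}"
          thus "0 \<le> \<sigma> j * (Mv s M z j)^2" using pos[of j] by simp
        qed
        thus "0 \<le> \<sigma> i0 * 0^2 + (\<Sum>j\<in>{..<s}-{i0}. \<sigma> j * (Mv s M z j)^2)"
          by simp
      qed
      finally have "\<mu> \<le> 0" using z(3) by simp
      thus False using mc cpos by simp
    qed
    ultimately show ?thesis by simp
  qed
  define u where "u j = l * z j + q j" for j
  have Mu: "Mv s M u i = l * u i / \<sigma> i" if i: "i < s" for i
  proof -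
    have "Mv s M u i = l * Mv s M z i + Mv s M q i"
      unfolding u_def Mv_def by (simp add: algebra_simps sum.distrib sum_distrib_left)
    also have "\<dots> = l * u i / \<sigma> i"
    proof (cases "i = i0")
      case True
      thus ?thesis using r0 zi0 Mvz[OF i] unfolding u_def by simp
    next
      case False
      thus ?thesis using Mq[OF i False] Mvz[OF i] l(2) sig0[OF i] unfolding u_def
        by (simp add: field_simps power2_eq_square)
    qed
    finally show ?thesis .
  qed
  have unz: "\<exists>i<s. u i \<noteq> 0"
  proof (rule ccontr)
    assume "\<not> ?thesis"
    hence u0: "\<And>i. i<s \<Longrightarrow> u i = 0" by auto
    have "\<And>k. k<s \<Longrightarrow> z k * Mv s M z k = - l * ((z k)^2 / \<sigma> k)"
    proof -
      fix k assume k: "k<s"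
      have "q k = - l * z k" using u0[OF k] unfolding u_def by simp
      thus "z k * Mv s M z k = - l * ((z k)^2 / \<sigma> k)" using Mvz[OF k] by (simp add: power2_eq_square)
    qed
    hence "(\<Sum>k<s. z k * Mv s M z k) = - l * (\<Sum>k<s. (z k)^2 / \<sigma> k)"
      by (simp add: sum_distrib_left)
    also have "(\<Sum>k<s. (z k)^2 / \<sigma> k) = (z i0)^2/\<sigma> i0 + WW s i0 \<sigma> z"
      unfolding WW_def using i0 by (intro sum.remove) auto
    finally have "0 = - l" using zMz zi0 z(2) by simp
    thus False using l(3) by simp
  qed
  define x where "x j = u j / \<sigma> j" for j
  define A where "A = mat s s (\<lambda>(i,j). M i j * \<sigma> j)"
  have "eigenvector A (vec s x) l"
    unfolding eigenvector_def
  proof (intro conjI)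
    show "vec s x \<in> carrier_vec (dim_row A)" unfolding A_def by simp
    show "vec s x \<noteq> 0\<^sub>v (dim_row A)"
    proof
      assume "vec s x = 0\<^sub>v (dim_row A)"
      hence "\<And>i. i < s \<Longrightarrow> x i = 0" unfolding A_def by (metis dim_row_mat(1) index_vec index_zero_vec(1))
      thus False using unz sig0 unfolding x_def by auto
    qed
    show "A *\<^sub>v vec s x = l \<cdot>\<^sub>v vec s x"
    proof (rule eq_vecI)
      fix i assume "i < dim_vec (l \<cdot>\<^sub>v vec s x)"
      hence i: "i < s" by simp
      have "(A *\<^sub>v vec s x) $ i = (\<Sum>j<s. M i j * \<sigma> j * x j)"
        unfolding A_def using i by (simp add: scalar_prod_def lessThan_atLeast0)
      also have "\<dots> = Mv s M u i" unfolding Mv_def x_def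
        by (rule sum.cong) (auto simp: sig0)
      also have "\<dots> = (l \<cdot>\<^sub>v vec s x) $ i" using Mu[OF i] i unfolding x_def by simp
      finally show "(A *\<^sub>v vec s x) $ i = (l \<cdot>\<^sub>v vec s x) $ i" .
    qed (simp add: A_def)
  qed
  hence "eigenvalue A l" unfolding eigenvalue_def by blast
  thus ?thesis using l(1) unfolding A_def by blast
qed

lemma hat_in: "N > 0 \<Longrightarrow> hat N x \<in> Dom N"
  unfolding hat_def Dom_def
  using pos_mod_bound[of "2*N+1" "fst x + N"] pos_mod_bound[of "2*N+1" "snd x + N"]
    pos_mod_sign[of "2*N+1" "fst x + N"] pos_mod_sign[of "2*N+1" "snd x + N"]
  by (auto simp: abs_le_iff)

lemma hat_id: "N > 0 \<Longrightarrow> x \<in> Dom N \<Longrightarrow> hat N x = x"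
  unfolding hat_def Dom_def by (cases x) (auto simp: abs_le_iff)

lemma hat_hat_lpt: "hat N (lpt (hat N x) l p) = hat N (lpt x l p)"
  unfolding hat_def lpt_def by (simp add: mod_simps algebra_simps)

lemma lpt_lpt: "lpt (lpt a k p) l p = lpt a (k+l) p"
  unfolding lpt_def by (simp add: algebra_simps)

lemma shift:
  assumes "hat N (lpt a k p) = hat N (lpt a k' p)"
  shows "hat N (lpt a (k+l) p) = hat N (lpt a (k'+l) p)"
proof -
  have "hat N (lpt a (k+l) p) = hat N (lpt (hat N (lpt a k p)) l p)"
    by (simp add: hat_hat_lpt lpt_lpt)
  also have "\<dots> = hat N (lpt (hat N (lpt a k' p)) l p)" using assms by simp
  also have "\<dots> = hat N (lpt a (k'+l) p)" by (simp add: hat_hat_lpt lpt_lpt)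
  finally show ?thesis .
qed

lemma per_mult:
  fixes g :: "int \<Rightarrow> 'a"
  assumes "\<And>k. g (k + d) = g k"
  shows "g (k + m * d) = g k"
proof -
  have "\<forall>k. g (k + m * d) = g k"
  proof (induction m rule: int_induct[where k=0])
    case base then show ?case by simp
  next
    case (step1 i)
    show ?case
    proof
      fix k
      have "g (k + (i+1) * d) = g ((k + i*d) + d)" by (simp add: algebra_simps)
      also have "\<dots> = g (k + i*d)" by (rule assms)
      finally show "g (k + (i+1) * d) = g k" using step1 by simp
    qed
  next
    case (step2 i)
    show ?case
    proof
      fix k
      have "g (k + i * d) = g ((k + (i-1)*d) + d)" by (simp add: algebra_simps)
      also have "\<dots> = g (k + (i-1)*d)" by (rule assms)
      finally show "g (k + (i-1) * d) = g k" using step2 by simp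
    qed
  qed
  thus ?thesis by blast
qed

lemma per_mod:
  fixes g :: "int \<Rightarrow> 'a"
  assumes "\<And>k. g (k + d) = g k"
  shows "g (k mod d) = g k"
proof -
  have "g (k mod d + (k div d) * d) = g (k mod d)" by (rule per_mult[where g=g and d=d, OF assms])
  moreover have "k mod d + (k div d) * d = k" by simp
  ultimately show ?thesis by simp
qed

lemma finite_Dom: "finite (Dom N)"
proof -
  have "Dom N \<subseteq> {-N..N} \<times> {-N..N}" unfolding Dom_def by (auto simp: abs_le_iff)
  thus ?thesis by (rule finite_subset) auto
qed

lemma period:
  assumes N: "N > 0"
  shows "hat N (lpt a (k + int (ncls N a p)) p) = hat N (lpt a k p)"
proof -
  define f where "f k = hat N (lpt a k p)" for k
  define n where "n = ncls N a p"
  have R: "{hat N (lpt a k p) | k. True} = range f" unfolding f_def by auto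
  have finR: "finite (range f)"
    by (rule finite_subset[OF _ finite_Dom[of N]]) (auto simp: f_def hat_in[OF N])
  have n: "n = card (range f)" unfolding n_def ncls_def R ..
  have "\<not> inj_on f {0..int n}"
  proof
    assume inj: "inj_on f {0..int n}"
    have "card (f ` {0..int n}) = card {0..int n}" by (rule card_image[OF inj])
    also have "\<dots> = n + 1" by simp
    finally have "n + 1 \<le> card (range f)"
      by (metis card_mono finR image_subsetI rangeI)
    thus False using n by simp
  qed
  then obtain i j where ij: "i \<in> {0..int n}" "j \<in> {0..int n}" "i \<noteq> j" "f i = f j"
    unfolding inj_on_def by blast
  obtain i' j' where ij': "0 \<le> i'" "i' < j'" "j' \<le> int n" "f i' = f j'"
    using ij by (cases "i < j") (auto intro: that[of i j] that[of j i])
  define d where "d = j' - i'"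
  have d: "0 < d" "d \<le> int n" using ij' unfolding d_def by auto
  have fd: "f (k + d) = f k" for k
  proof -
    have "f (i' + (k - i')) = f (j' + (k - i'))"
      using shift[of N a i' p j' "k - i'"] ij'(4) unfolding f_def by simp
    thus ?thesis unfolding d_def by (simp add: algebra_simps)
  qed
  have "range f \<subseteq> f ` {0..<d}"
  proof
    fix y assume "y \<in> range f"
    then obtain k where k: "y = f k" by auto
    have "f (k mod d) = f k" by (rule per_mod[where g=f and d=d, OF fd])
    moreover have "k mod d \<in> {0..<d}" using d by auto
    ultimately show "y \<in> f ` {0..<d}" using k by (metis image_eqI)
  qed
  hence "card (range f) \<le> card (f ` {0..<d})" by (simp add: card_mono)
  also have "\<dots> \<le> card {0..<d}" by (rule card_image_le) simp
  finally have "int n \<le> d" using n d by simp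
  hence "d = int n" using d by simp
  thus ?thesis using fd unfolding f_def n_def by simp
qed

lemma rho_period:
  assumes "N > 0"
  shows "rho N a p (k mod int (ncls N a p)) = rho N a p k"
  by (rule per_mod) (simp add: rho_def period[OF assms])

definition ee :: "nat \<Rightarrow> nat \<Rightarrow> real" where "ee a = (\<lambda>j. if j = a then 1 else 0)"

lemma sum_pt1:
  assumes "finite A" "a \<in> A" "\<And>j. j \<in> A \<Longrightarrow> j \<noteq> a \<Longrightarrow> f j = 0"
  shows "sum f A = f a"
proof -
  have "sum f A = sum f {a}"
    by (rule sum.mono_neutral_right) (use assms in auto)
  thus ?thesis by simp
qed

lemma sum_pt2:
  assumes "finite A" "a \<in> A" "b \<in> A" "a \<noteq> b" "\<And>j. j \<in> A \<Longrightarrow> j \<noteq> a \<Longrightarrow> j \<noteq> b \<Longrightarrow> f j = 0"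
  shows "sum f A = f a + f b"
proof -
  have "sum f A = sum f {a, b}"
    by (rule sum.mono_neutral_right) (use assms in auto)
  thus ?thesis using assms(4) by simp
qed

lemma supp_ee: "a < s \<Longrightarrow> a \<noteq> i0 \<Longrightarrow> supp s i0 (ee a)"
  unfolding supp_def ee_def by auto

lemma NN_ee: "a < s \<Longrightarrow> NN s M \<sigma> (ee a) = (\<Sum>j<s. \<sigma> j * (M j a)^2)"
  unfolding NN_def ee_def using Mv_delta[of a s M] by simp

lemma WW_ee: "a < s \<Longrightarrow> a \<noteq> i0 \<Longrightarrow> WW s i0 \<sigma> (ee a) = 1 / \<sigma> a"
  unfolding WW_def ee_def by (subst sum_pt1[where a=a]) auto

lemma BB_ee: "a < s \<Longrightarrow> b < s \<Longrightarrow> a \<noteq> b \<Longrightarrow>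
   BB s i0 M \<sigma> \<mu> (ee a) (ee b) = (\<Sum>j<s. \<sigma> j * M j a * M j b)"
proof -
  assume ab: "a < s" "b < s" "a \<noteq> b"
  have z: "(\<Sum>j\<in>{..<s}-{i0}. ee a j * ee b j / \<sigma> j) = 0"
    by (rule sum.neutral) (use ab in \<open>auto simp: ee_def\<close>)
  show ?thesis unfolding BB_def z using Mv_delta[of a s M] Mv_delta[of b s M] ab
    by (simp add: ee_def)
qed

lemma nsq_pos: "p \<noteq> (0,0) \<Longrightarrow> nsq p > 0"
  unfolding nsq_def by (cases p) (auto simp: sum_power2_gt_zero_iff)

lemma rho_pos: "nsq p > 0 \<Longrightarrow> nsq (hat N (lpt a k p)) > nsq p \<Longrightarrow> rho N a p k > 0"
  unfolding rho_def by (simp add: frac_less2)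

definition nx :: "nat \<Rightarrow> nat \<Rightarrow> nat" where "nx n i = (if i+1 = n then 0 else i+1)"
definition pv :: "nat \<Rightarrow> nat \<Rightarrow> nat" where "pv n i = (if i = 0 then n-1 else i-1)"
definition Mz :: "nat \<Rightarrow> nat \<Rightarrow> nat \<Rightarrow> real" where
  "Mz n i j = (if j = nx n i then 1 else if j = pv n i then -1 else 0)"

lemma nx_mod: "i < n \<Longrightarrow> (i+1) mod n = nx n i"
  unfolding nx_def by (auto simp: mod_if)

lemma pv_mod: "i < n \<Longrightarrow> (i+n-1) mod n = pv n i"
  unfolding pv_def by (cases "i = 0") (auto simp: mod_if)

lemma Mz_skew: "3 \<le> n \<Longrightarrow> i < n \<Longrightarrow> j < n \<Longrightarrow> Mz n j i = - Mz n i j"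
  unfolding Mz_def nx_def pv_def by auto

lemma zeitlin_eq:
  assumes N: "N > 0" and n3: "3 \<le> ncls N a p"
  shows "zeitlin_mat N a p = mat (ncls N a p) (ncls N a p)
           (\<lambda>(i,j). Mz (ncls N a p) i j * rho N a p (int j))"
proof -
  define n where "n = ncls N a p"
  have rp: "rho N a p (k mod int n) = rho N a p k" for k
    unfolding n_def by (rule rho_period[OF N])
  have e1: "rho N a p (int i + 1) = rho N a p (int (nx n i))" if "i < n" for i
  proof -
    have "int (nx n i) = (int i + 1) mod int n" using nx_mod[OF that] by (metis of_nat_Suc of_nat_mod add.commute Suc_eq_plus1)
    thus ?thesis using rp by simp
  qed
  have e2: "rho N a p (int i - 1) = rho N a p (int (pv n i))" if "i < n" for i
  proof -
    have "int (pv n i) = int ((i+n-1) mod n)" using pv_mod[OF that] by simp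
    also have "\<dots> = (int i + int n - 1) mod int n" using that by (simp add: of_nat_mod of_nat_diff)
    also have "\<dots> = (int i - 1) mod int n"
      using mod_add_self2[of "int i - 1" "int n"] by (simp add: algebra_simps)
    finally show ?thesis using rp by simp
  qed
  show ?thesis
    unfolding zeitlin_mat_def Let_def n_def[symmetric]
  proof (rule eq_matI)
    fix i j assume i: "i < dim_row (mat n n (\<lambda>(i,j). Mz n i j * rho N a p (int j)))"
      and j: "j < dim_col (mat n n (\<lambda>(i,j). Mz n i j * rho N a p (int j)))"
    hence i: "i < n" and j: "j < n" by auto
    show "mat n n (\<lambda>(i, j). if j = (i + 1) mod n then rho N a p (int i + 1)
            else if j = (i + n - 1) mod n then - rho N a p (int i - 1) else 0) $$ (i, j) =
          mat n n (\<lambda>(i,j). Mz n i j * rho N a p (int j)) $$ (i, j)"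
      using i j e1[OF i] e2[OF i] nx_mod[OF i] pv_mod[OF i] unfolding Mz_def by auto
  qed auto
qed

lemma zeit_case1:
  assumes N: "N > 0" and n3: "3 \<le> ncls N a p"
    and pos: "\<And>j. 0 < j \<Longrightarrow> j < ncls N a p \<Longrightarrow> rho N a p (int j) > 0"
    and c: "c \<ge> 0" and cc: "c^2 = - rho N a p 1 * (rho N a p 0 + rho N a p 2)" and cp: "0 < c^2"
  shows "\<exists>l>c. eigenvalue (zeitlin_mat N a p) l"
proof -
  define n where "n = ncls N a p"
  define \<sigma> where "\<sigma> j = rho N a p (int j)" for j
  have n: "3 \<le> n" using n3 unfolding n_def .
  have p1: "\<sigma> 1 > 0" and p2: "\<sigma> 2 > 0" using pos[of 1] pos[of 2] n unfolding \<sigma>_def n_def by auto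
  have cc': "c^2 = - \<sigma> 1 * (\<sigma> 0 + \<sigma> 2)" using cc unfolding \<sigma>_def by simp
  have s02: "\<sigma> 0 + \<sigma> 2 < 0"
    using cp cc' p1 mult_nonneg_nonneg[of "\<sigma> 1" "\<sigma> 0 + \<sigma> 2"] by linarith
  hence s0: "\<sigma> 0 < 0" using p2 by simp
  have posn: "\<And>j. j < n \<Longrightarrow> j \<noteq> 0 \<Longrightarrow> \<sigma> j > 0" using pos unfolding \<sigma>_def n_def by auto
  have v1: "\<And>j. j < n \<Longrightarrow> j \<noteq> 0 \<Longrightarrow> j \<noteq> 2 \<Longrightarrow> Mz n j 1 = 0"
    unfolding Mz_def nx_def pv_def using n by auto
  have m01: "Mz n 0 1 = 1" and m21: "Mz n 2 1 = -1" unfolding Mz_def nx_def pv_def using n by auto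
  have m0n: "Mz n 0 (n-1) = -1" and m2n: "Mz n 2 (n-1) = (if n = 4 then 1 else 0)"
    unfolding Mz_def nx_def pv_def using n by auto
  have NN1: "NN n (Mz n) \<sigma> (ee 1) = \<sigma> 0 + \<sigma> 2"
  proof -
    have "NN n (Mz n) \<sigma> (ee 1) = (\<Sum>j<n. \<sigma> j * (Mz n j 1)^2)" by (rule NN_ee) (use n in simp)
    also have "\<dots> = \<sigma> 0 * (Mz n 0 1)^2 + \<sigma> 2 * (Mz n 2 1)^2"
      by (rule sum_pt2) (use n v1 in auto)
    finally show ?thesis using m01 m21 by simp
  qed
  have WW1: "WW n 0 \<sigma> (ee 1) = 1 / \<sigma> 1" using n by (intro WW_ee) auto
  have t: "NN n (Mz n) \<sigma> (ee 1) + c^2 * WW n 0 \<sigma> (ee 1) \<le> 0"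
    unfolding NN1 WW1 cc' using p1 by simp
  have BB1: "BB n 0 (Mz n) \<sigma> (c^2) (ee 1) (ee (n-1)) = - \<sigma> 0 - (if n = 4 then \<sigma> 2 else 0)"
  proof -
    have "BB n 0 (Mz n) \<sigma> (c^2) (ee 1) (ee (n-1)) = (\<Sum>j<n. \<sigma> j * Mz n j 1 * Mz n j (n-1))"
      by (rule BB_ee) (use n in auto)
    also have "\<dots> = \<sigma> 0 * Mz n 0 1 * Mz n 0 (n-1) + \<sigma> 2 * Mz n 2 1 * Mz n 2 (n-1)"
      by (rule sum_pt2) (use n v1 in auto)
    finally show ?thesis using m01 m21 m0n m2n by simp
  qed
  have h: "BB n 0 (Mz n) \<sigma> (c^2) (ee 1) (ee (n-1)) \<noteq> 0"
    unfolding BB1 using s0 s02 by auto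
  have "\<exists>l>c. eigenvalue (mat n n (\<lambda>(i,j). Mz n i j * \<sigma> j)) l"
  proof (rule abstract_eig[where ?i0.0=0 and t="ee 1" and h="ee (n-1)"])
    show "\<And>i j. i < n \<Longrightarrow> j < n \<Longrightarrow> Mz n j i = - Mz n i j" by (rule Mz_skew[OF n])
  qed (use n s0 posn c t h in \<open>auto intro!: supp_ee\<close>)
  thus ?thesis unfolding zeitlin_eq[OF N n3] n_def[symmetric] \<sigma>_def .
qed

lemma zeit_case2:
  assumes N: "N > 0" and n3: "3 \<le> ncls N a p"
    and pos: "\<And>j. 0 < j \<Longrightarrow> j < ncls N a p \<Longrightarrow> rho N a p (int j) > 0"
    and c: "c \<ge> 0"
    and cc: "c^2 = - rho N a p (int (ncls N a p) - 1) * (rho N a p 0 + rho N a p (int (ncls N a p) - 2))"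
    and cp: "0 < c^2"
  shows "\<exists>l>c. eigenvalue (zeitlin_mat N a p) l"
proof -
  define n where "n = ncls N a p"
  define \<sigma> where "\<sigma> j = rho N a p (int j)" for j
  have n: "3 \<le> n" using n3 unfolding n_def .
  have p1: "\<sigma> (n-1) > 0" and p2: "\<sigma> (n-2) > 0" using pos[of "n-1"] pos[of "n-2"] n unfolding \<sigma>_def n_def by auto
  have i1: "int (n-1) = int n - 1" and i2: "int (n-2) = int n - 2" using n by auto
  have cc': "c^2 = - \<sigma> (n-1) * (\<sigma> 0 + \<sigma> (n-2))" using cc unfolding \<sigma>_def n_def[symmetric] i1 i2 by simp
  have s02: "\<sigma> 0 + \<sigma> (n-2) < 0"
    using cp cc' p1 mult_nonneg_nonneg[of "\<sigma> (n-1)" "\<sigma> 0 + \<sigma> (n-2)"] by linarith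
  hence s0: "\<sigma> 0 < 0" using p2 by simp
  have posn: "\<And>j. j < n \<Longrightarrow> j \<noteq> 0 \<Longrightarrow> \<sigma> j > 0" using pos unfolding \<sigma>_def n_def by auto
  have v1: "\<And>j. j < n \<Longrightarrow> j \<noteq> 0 \<Longrightarrow> j \<noteq> n-2 \<Longrightarrow> Mz n j (n-1) = 0"
    unfolding Mz_def nx_def pv_def using n by auto
  have m01: "Mz n 0 1 = 1" and m21: "Mz n (n-2) 1 = (if n = 4 then -1 else 0)"
    unfolding Mz_def nx_def pv_def using n by auto
  have m0n: "Mz n 0 (n-1) = -1" and m2n: "Mz n (n-2) (n-1) = 1"
    unfolding Mz_def nx_def pv_def using n by auto
  have NN1: "NN n (Mz n) \<sigma> (ee (n-1)) = \<sigma> 0 + \<sigma> (n-2)"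
  proof -
    have "NN n (Mz n) \<sigma> (ee (n-1)) = (\<Sum>j<n. \<sigma> j * (Mz n j (n-1))^2)" by (rule NN_ee) (use n in simp)
    also have "\<dots> = \<sigma> 0 * (Mz n 0 (n-1))^2 + \<sigma> (n-2) * (Mz n (n-2) (n-1))^2"
      by (rule sum_pt2) (use n v1 in auto)
    finally show ?thesis using m0n m2n by simp
  qed
  have WW1: "WW n 0 \<sigma> (ee (n-1)) = 1 / \<sigma> (n-1)" using n by (intro WW_ee) auto
  have t: "NN n (Mz n) \<sigma> (ee (n-1)) + c^2 * WW n 0 \<sigma> (ee (n-1)) \<le> 0"
    unfolding NN1 WW1 cc' using p1 by simp
  have BB1: "BB n 0 (Mz n) \<sigma> (c^2) (ee (n-1)) (ee 1) = - \<sigma> 0 - (if n = 4 then \<sigma> (n-2) else 0)"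
  proof -
    have "BB n 0 (Mz n) \<sigma> (c^2) (ee (n-1)) (ee 1) = (\<Sum>j<n. \<sigma> j * Mz n j (n-1) * Mz n j 1)"
      by (rule BB_ee) (use n in auto)
    also have "\<dots> = \<sigma> 0 * Mz n 0 (n-1) * Mz n 0 1 + \<sigma> (n-2) * Mz n (n-2) (n-1) * Mz n (n-2) 1"
      by (rule sum_pt2) (use n v1 in auto)
    finally show ?thesis using m01 m21 m0n m2n by simp
  qed
  have h: "BB n 0 (Mz n) \<sigma> (c^2) (ee (n-1)) (ee 1) \<noteq> 0"
    unfolding BB1 using s0 s02 by auto
  have "\<exists>l>c. eigenvalue (mat n n (\<lambda>(i,j). Mz n i j * \<sigma> j)) l"
  proof (rule abstract_eig[where ?i0.0=0 and t="ee (n-1)" and h="ee 1"])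
    show "\<And>i j. i < n \<Longrightarrow> j < n \<Longrightarrow> Mz n j i = - Mz n i j" by (rule Mz_skew[OF n])
  qed (use n s0 posn c t h in \<open>auto intro!: supp_ee\<close>)
  thus ?thesis unfolding zeitlin_eq[OF N n3] n_def[symmetric] \<sigma>_def .
qed

lemma abs_le_abs_mult: "(x::int) \<noteq> 0 \<Longrightarrow> \<bar>k\<bar> \<le> \<bar>k * x\<bar>"
proof -
  assume "x \<noteq> 0"
  hence "1 \<le> \<bar>x\<bar>" by simp
  hence "\<bar>k\<bar> * 1 \<le> \<bar>k\<bar> * \<bar>x\<bar>" by (rule mult_left_mono) simp
  thus ?thesis by (simp add: abs_mult)
qed

lemma G_finite:
  assumes "p \<noteq> (0,0)"
  shows "finite {k. lpt a k p \<in> Dom N}"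
proof -
  define B where "B = N + \<bar>fst a\<bar> + \<bar>snd a\<bar>"
  have "{k. lpt a k p \<in> Dom N} \<subseteq> {-B..B}"
  proof
    fix k assume "k \<in> {k. lpt a k p \<in> Dom N}"
    hence k: "\<bar>fst a + k * fst p\<bar> \<le> N" "\<bar>snd a + k * snd p\<bar> \<le> N"
      unfolding lpt_def Dom_def by auto
    show "k \<in> {-B..B}"
    proof (cases "fst p = 0")
      case False
      have "\<bar>k\<bar> \<le> \<bar>k * fst p\<bar>" by (rule abs_le_abs_mult[OF False])
      thus ?thesis using k unfolding B_def by auto
    next
      case True
      hence "snd p \<noteq> 0" using assms by (cases p) auto
      hence "\<bar>k\<bar> \<le> \<bar>k * snd p\<bar>" by (rule abs_le_abs_mult)
      thus ?thesis using k unfolding B_def by auto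
    qed
  qed
  thus ?thesis by (rule finite_subset) simp
qed

lemma coord_conv:
  fixes x q k1 k2 k N :: int
  assumes "\<bar>x + k1 * q\<bar> \<le> N" "\<bar>x + k2 * q\<bar> \<le> N" "k1 \<le> k" "k \<le> k2"
  shows "\<bar>x + k * q\<bar> \<le> N"
proof (cases "0 \<le> q")
  case True
  have "k1 * q \<le> k * q" "k * q \<le> k2 * q" using assms True by (auto intro: mult_right_mono)
  thus ?thesis using assms by (auto simp: abs_le_iff)
next
  case False
  have "k * q \<le> k1 * q" "k2 * q \<le> k * q" using assms False by (auto intro: mult_right_mono_neg)
  thus ?thesis using assms by (auto simp: abs_le_iff)
qed

lemma G_conv:
  assumes "lpt a k1 p \<in> Dom N" "lpt a k2 p \<in> Dom N" "k1 \<le> k" "k \<le> k2"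
  shows "lpt a k p \<in> Dom N"
  using assms coord_conv[of "fst a" k1 "fst p" N k2 k] coord_conv[of "snd a" k1 "snd p" N k2 k]
  unfolding lpt_def Dom_def by auto

lemma gal_facts:
  assumes p: "p \<noteq> (0,0)" and a: "a \<in> Dom N"
    and a1: "lpt a 1 p \<in> Dom N" and a2: "lpt a (-1) p \<in> Dom N"
  shows "1 \<le> gal_m1 N a p" "1 \<le> gal_m2 N a p"
    "\<And>k. - gal_m1 N a p \<le> k \<Longrightarrow> k \<le> gal_m2 N a p \<Longrightarrow> lpt a k p \<in> Dom N"
proof -
  define G where "G = {k. lpt a k p \<in> Dom N}"
  have fin: "finite G" unfolding G_def by (rule G_finite[OF p])
  have m1: "1 \<in> G" "-1 \<in> G" using a1 a2 unfolding G_def by auto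
  have ne: "G \<noteq> {}" using m1 by auto
  show "1 \<le> gal_m1 N a p" unfolding gal_m1_def G_def[symmetric]
    using Min_le[OF fin m1(2)] by simp
  show "1 \<le> gal_m2 N a p" unfolding gal_m2_def G_def[symmetric]
    using Max_ge[OF fin m1(1)] by simp
  fix k assume k: "- gal_m1 N a p \<le> k" "k \<le> gal_m2 N a p"
  have "Min G \<in> G" "Max G \<in> G" using fin ne by auto
  thus "lpt a k p \<in> Dom N"
    using k G_conv[of a "Min G" p N "Max G" k] unfolding gal_m1_def gal_m2_def G_def[symmetric]
    unfolding G_def by auto
qed

lemma rho_shift: "N > 0 \<Longrightarrow> rho N a p (k + int (ncls N a p)) = rho N a p k"
  unfolding rho_def using period by simp

lemma G_rho_pos:
  assumes N: "N > 0" and p: "p \<noteq> (0,0)" and a: "a \<in> Dom N" and n3: "3 \<le> ncls N a p"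
    and hyp: "\<forall>k \<in> {1 .. int (ncls N a p) - 1}. nsq (hat N (lpt a k p)) > nsq p"
    and kG: "lpt a k p \<in> Dom N" and k0: "k \<noteq> 0"
  shows "rho N a p k > 0"
proof -
  define n where "n = int (ncls N a p)"
  have n0: "n > 0" using n3 unfolding n_def by simp
  define r where "r = k mod n"
  have fr: "hat N (lpt a r p) = hat N (lpt a k p)"
    unfolding r_def n_def by (rule per_mod[where g="\<lambda>k. hat N (lpt a k p)"]) (rule period[OF N])
  have r0: "r \<noteq> 0"
  proof
    assume "r = 0"
    hence "hat N (lpt a k p) = hat N (lpt a 0 p)" using fr by simp
    also have "lpt a 0 p = a" unfolding lpt_def by simp
    finally have "lpt a k p = a" using hat_id[OF N kG] hat_id[OF N a] by simp
    hence "k * fst p = 0" "k * snd p = 0" unfolding lpt_def by (auto simp: prod_eq_iff)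
    thus False using k0 p by (cases p) auto
  qed
  have "0 \<le> r" "r < n" using n0 unfolding r_def by auto
  hence "r \<in> {1 .. n - 1}" using r0 by auto
  hence "nsq (hat N (lpt a r p)) > nsq p" using hyp unfolding n_def by blast
  hence "rho N a p r > 0" by (rule rho_pos[OF nsq_pos[OF p]])
  moreover have "rho N a p r = rho N a p k" unfolding r_def n_def by (rule rho_period[OF N])
  ultimately show ?thesis by simp
qed

definition Mg :: "nat \<Rightarrow> nat \<Rightarrow> real" where
  "Mg i j = (if j = i+1 then 1 else if i = j+1 then -1 else 0)"

lemma Mg_skew: "Mg j i = - Mg i j"
  unfolding Mg_def by auto

lemma galerkin_eq:
  "galerkin_mat N a p = mat (nat (gal_m1 N a p + gal_m2 N a p + 1)) (nat (gal_m1 N a p + gal_m2 N a p + 1))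
     (\<lambda>(i,j). Mg i j * rho N a p (int j - gal_m1 N a p))"
  unfolding galerkin_mat_def Let_def
  by (rule eq_matI) (auto simp: Mg_def algebra_simps)

locale galset =
  fixes N :: int and a p :: "int \<times> int" and c :: real
  assumes N: "N > 0" and p: "p \<noteq> (0,0)" and a: "a \<in> Dom N"
    and a1: "lpt a 1 p \<in> Dom N" and a2: "lpt a (-1) p \<in> Dom N"
    and n3: "3 \<le> ncls N a p"
    and hyp: "\<forall>k \<in> {1 .. int (ncls N a p) - 1}. nsq (hat N (lpt a k p)) > nsq p"
    and c: "c \<ge> 0"
begin

definition "m1 = gal_m1 N a p"
definition "m2 = gal_m2 N a p"
definition "s = nat (m1 + m2 + 1)"
definition "i0 = nat m1"
definition "\<sigma> j = rho N a p (int j - m1)"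

lemma m12: "1 \<le> m1" "1 \<le> m2" using gal_facts[OF p a a1 a2] unfolding m1_def m2_def by auto

lemma i0: "int i0 = m1" "1 \<le> i0" "i0 + 2 \<le> s" using m12 unfolding i0_def s_def by auto

lemma hpos: "0 < j \<Longrightarrow> j < ncls N a p \<Longrightarrow> rho N a p (int j) > 0"
  using hyp rho_pos[OF nsq_pos[OF p]] by auto

lemma posn: "j < s \<Longrightarrow> j \<noteq> i0 \<Longrightarrow> \<sigma> j > 0"
proof -
  assume j: "j < s" "j \<noteq> i0"
  have "lpt a (int j - m1) p \<in> Dom N"
    using gal_facts(3)[OF p a a1 a2, of "int j - m1"] j m12 unfolding m1_def m2_def s_def by auto
  moreover have "int j - m1 \<noteq> 0" using j i0 by auto
  ultimately show ?thesis unfolding \<sigma>_def by (rule G_rho_pos[OF N p a n3 hyp])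
qed

lemma sig: "\<sigma> i0 = rho N a p 0" "\<sigma> (i0+1) = rho N a p 1" "\<sigma> (i0+2) = rho N a p 2"
  "\<sigma> (i0-1) = rho N a p (-1)"
  using i0 unfolding \<sigma>_def by (auto simp: of_nat_diff)

lemma sig2: "2 \<le> i0 \<Longrightarrow> \<sigma> (i0-2) = rho N a p (-2)"
  using i0 unfolding \<sigma>_def by (auto simp: of_nat_diff)

lemma eig_mat: "galerkin_mat N a p = mat s s (\<lambda>(i,j). Mg i j * \<sigma> j)"
  unfolding galerkin_eq s_def m1_def m2_def \<sigma>_def ..

lemma apply_abs:
  assumes "i0 < s" "\<sigma> i0 < 0" "supp s i0 t" "NN s Mg \<sigma> t + c^2 * WW s i0 \<sigma> t \<le> 0"
    "supp s i0 h" "BB s i0 Mg \<sigma> (c^2) t h \<noteq> 0"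
  shows "\<exists>l>c. eigenvalue (galerkin_mat N a p) l"
  unfolding eig_mat
proof (rule abstract_eig[where ?i0.0=i0 and t=t and h=h])
  show "\<And>i j. i < s \<Longrightarrow> j < s \<Longrightarrow> Mg j i = - Mg i j" by (rule Mg_skew)
qed (use assms posn c in auto)

lemma case1:
  assumes cc: "c^2 = - rho N a p 1 * (rho N a p 0 + rho N a p 2)" and cp: "0 < c^2"
  shows "\<exists>l>c. eigenvalue (galerkin_mat N a p) l"
proof -
  have p1: "rho N a p 1 > 0" and p2: "rho N a p 2 > 0" using hpos[of 1] hpos[of 2] n3 by auto
  have s02: "rho N a p 0 + rho N a p 2 < 0"
    using cp cc p1 mult_nonneg_nonneg[of "rho N a p 1" "rho N a p 0 + rho N a p 2"] by linarith
  hence s0: "rho N a p 0 < 0" using p2 by simp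
  have v: "\<And>j. j \<noteq> i0 \<Longrightarrow> j \<noteq> i0+2 \<Longrightarrow> Mg j (i0+1) = 0" unfolding Mg_def by auto
  have NNle: "NN s Mg \<sigma> (ee (i0+1)) \<le> rho N a p 0 + rho N a p 2"
  proof -
    have "NN s Mg \<sigma> (ee (i0+1)) = (\<Sum>j<s. \<sigma> j * (Mg j (i0+1))^2)" by (rule NN_ee) (use i0 in simp)
    also have "\<dots> \<le> rho N a p 0 + rho N a p 2"
    proof (cases "i0 + 2 < s")
      case True
      have "(\<Sum>j<s. \<sigma> j * (Mg j (i0+1))^2) = \<sigma> i0 * (Mg i0 (i0+1))^2 + \<sigma> (i0+2) * (Mg (i0+2) (i0+1))^2"
        by (rule sum_pt2) (use True v in auto)
      thus ?thesis using sig by (simp add: Mg_def)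
    next
      case False
      have "(\<Sum>j<s. \<sigma> j * (Mg j (i0+1))^2) = \<sigma> i0 * (Mg i0 (i0+1))^2"
        by (rule sum_pt1) (use False v i0 in auto)
      thus ?thesis using sig p2 by (simp add: Mg_def)
    qed
    finally show ?thesis .
  qed
  have WW1: "WW s i0 \<sigma> (ee (i0+1)) = 1 / rho N a p 1" using i0 sig by (subst WW_ee) auto
  have t: "NN s Mg \<sigma> (ee (i0+1)) + c^2 * WW s i0 \<sigma> (ee (i0+1)) \<le> 0"
    using NNle unfolding WW1 cc using p1 by simp
  have BB1: "BB s i0 Mg \<sigma> (c^2) (ee (i0+1)) (ee (i0-1)) = - rho N a p 0"
  proof -
    have "BB s i0 Mg \<sigma> (c^2) (ee (i0+1)) (ee (i0-1)) = (\<Sum>j<s. \<sigma> j * Mg j (i0+1) * Mg j (i0-1))"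
      by (rule BB_ee) (use i0 in auto)
    also have "\<dots> = \<sigma> i0 * Mg i0 (i0+1) * Mg i0 (i0-1)"
      by (rule sum_pt1) (use i0 v in \<open>auto simp: Mg_def\<close>)
    finally show ?thesis using sig i0 by (simp add: Mg_def)
  qed
  show ?thesis
    by (rule apply_abs[where t="ee (i0+1)" and h="ee (i0-1)"])
       (use i0 sig s0 t BB1 in \<open>auto intro!: supp_ee\<close>)
qed

lemma case2:
  assumes cc: "c^2 = - rho N a p (int (ncls N a p) - 1) * (rho N a p 0 + rho N a p (int (ncls N a p) - 2))"
    and cp: "0 < c^2"
  shows "\<exists>l>c. eigenvalue (galerkin_mat N a p) l"
proof -
  define n where "n = ncls N a p"
  have n: "3 \<le> n" using n3 unfolding n_def .
  have e1: "rho N a p (int n - 1) = rho N a p (-1)" using rho_shift[OF N, of a p "-1"] unfolding n_def by simp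
  have e2: "rho N a p (int n - 2) = rho N a p (-2)" using rho_shift[OF N, of a p "-2"] unfolding n_def by simp
  have p1: "rho N a p (-1) > 0" and p2: "rho N a p (-2) > 0"
    using hpos[of "n-1"] hpos[of "n-2"] n e1 e2 unfolding n_def by (auto simp: of_nat_diff)
  have cc': "c^2 = - rho N a p (-1) * (rho N a p 0 + rho N a p (-2))"
    using cc e1 e2 unfolding n_def by simp
  have s02: "rho N a p 0 + rho N a p (-2) < 0"
    using cp cc' p1 mult_nonneg_nonneg[of "rho N a p (-1)" "rho N a p 0 + rho N a p (-2)"] by linarith
  hence s0: "rho N a p 0 < 0" using p2 by simp
  have v: "\<And>j. j \<noteq> i0 \<Longrightarrow> j \<noteq> i0-2 \<Longrightarrow> Mg j (i0-1) = 0" unfolding Mg_def using i0 by auto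
  have NNle: "NN s Mg \<sigma> (ee (i0-1)) \<le> rho N a p 0 + rho N a p (-2)"
  proof -
    have "NN s Mg \<sigma> (ee (i0-1)) = (\<Sum>j<s. \<sigma> j * (Mg j (i0-1))^2)" by (rule NN_ee) (use i0 in simp)
    also have "\<dots> \<le> rho N a p 0 + rho N a p (-2)"
    proof (cases "2 \<le> i0")
      case True
      have "(\<Sum>j<s. \<sigma> j * (Mg j (i0-1))^2) = \<sigma> i0 * (Mg i0 (i0-1))^2 + \<sigma> (i0-2) * (Mg (i0-2) (i0-1))^2"
        by (rule sum_pt2) (use True v i0 in auto)
      moreover have "Mg i0 (i0-1) = -1" "Mg (i0-2) (i0-1) = 1" using True by (auto simp: Mg_def)
      ultimately show ?thesis using sig sig2[OF True] by simp
    next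
      case False
      hence i1: "i0 = 1" using i0 by simp
      have "(\<Sum>j<s. \<sigma> j * (Mg j (i0-1))^2) = \<sigma> i0 * (Mg i0 (i0-1))^2"
        by (rule sum_pt1) (use i1 i0 in \<open>auto simp: Mg_def\<close>)
      thus ?thesis using sig p2 i1 by (simp add: Mg_def)
    qed
    finally show ?thesis .
  qed
  have WW1: "WW s i0 \<sigma> (ee (i0-1)) = 1 / rho N a p (-1)" using i0 sig by (subst WW_ee) auto
  have t: "NN s Mg \<sigma> (ee (i0-1)) + c^2 * WW s i0 \<sigma> (ee (i0-1)) \<le> 0"
    using NNle unfolding WW1 cc' using p1 by simp
  have BB1: "BB s i0 Mg \<sigma> (c^2) (ee (i0-1)) (ee (i0+1)) = - rho N a p 0"
  proof -
    have "BB s i0 Mg \<sigma> (c^2) (ee (i0-1)) (ee (i0+1)) = (\<Sum>j<s. \<sigma> j * Mg j (i0-1) * Mg j (i0+1))"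
      by (rule BB_ee) (use i0 in auto)
    also have "\<dots> = \<sigma> i0 * Mg i0 (i0-1) * Mg i0 (i0+1)"
      by (rule sum_pt1) (use i0 v in \<open>auto simp: Mg_def\<close>)
    finally show ?thesis using sig i0 by (simp add: Mg_def)
  qed
  show ?thesis
    by (rule apply_abs[where t="ee (i0-1)" and h="ee (i0+1)"])
       (use i0 sig s0 t BB1 in \<open>auto intro!: supp_ee\<close>)
qed

end

theorem theorem2:
  fixes p a :: "int \<times> int" and N :: int
  assumes "p \<noteq> (0, 0)"
    and "N > 0"
    and "a \<in> Dom N"
    and "nsq a < nsq p"
    and "lpt a 1 p \<in> Dom N" and "lpt a (-1) p \<in> Dom N"
    and "ncls N a p \<ge> 3"
    and "\<forall>k \<in> {1 .. int (ncls N a p) - 1}. nsq (hat N (lpt a k p)) > nsq p"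
  shows "(0 < - rho N a p 1 * (rho N a p 0 + rho N a p 2) \<longrightarrow>
           (\<exists>l1 l2. l1 > sqrt (- rho N a p 1 * (rho N a p 0 + rho N a p 2))
                  \<and> l2 > sqrt (- rho N a p 1 * (rho N a p 0 + rho N a p 2))
                  \<and> eigenvalue (galerkin_mat N a p) l1
                  \<and> eigenvalue (zeitlin_mat N a p) l2))
       \<and> (0 < - rho N a p (int (ncls N a p) - 1)
                * (rho N a p 0 + rho N a p (int (ncls N a p) - 2)) \<longrightarrow>
           (\<exists>l1 l2. l1 > sqrt (- rho N a p (int (ncls N a p) - 1)
                               * (rho N a p 0 + rho N a p (int (ncls N a p) - 2)))
                  \<and> l2 > sqrt (- rho N a p (int (ncls N a p) - 1)
                               * (rho N a p 0 + rho N a p (int (ncls N a p) - 2)))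
                  \<and> eigenvalue (galerkin_mat N a p) l1
                  \<and> eigenvalue (zeitlin_mat N a p) l2))"
proof -
  note N = assms(2) and n3 = assms(7)
  have hp: "\<And>j. 0 < j \<Longrightarrow> j < ncls N a p \<Longrightarrow> rho N a p (int j) > 0"
    using assms(8) rho_pos[OF nsq_pos[OF assms(1)]] by auto
  show ?thesis
  proof (intro conjI impI)
    assume P: "0 < - rho N a p 1 * (rho N a p 0 + rho N a p 2)"
    define c where "c = sqrt (- rho N a p 1 * (rho N a p 0 + rho N a p 2))"
    have c0: "c \<ge> 0" and cc: "c^2 = - rho N a p 1 * (rho N a p 0 + rho N a p 2)" and cp: "0 < c^2"
      using P unfolding c_def by auto
    have G: "galset N a p c" unfolding galset_def using assms c0 by auto
    obtain l1 where l1: "l1 > c" "eigenvalue (galerkin_mat N a p) l1"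
      using galset.case1[OF G cc cp] by blast
    obtain l2 where l2: "l2 > c" "eigenvalue (zeitlin_mat N a p) l2"
      using zeit_case1[OF N n3 hp c0 cc cp] by blast
    show "\<exists>l1 l2. l1 > sqrt (- rho N a p 1 * (rho N a p 0 + rho N a p 2))
                  \<and> l2 > sqrt (- rho N a p 1 * (rho N a p 0 + rho N a p 2))
                  \<and> eigenvalue (galerkin_mat N a p) l1
                  \<and> eigenvalue (zeitlin_mat N a p) l2"
      using l1 l2 unfolding c_def by blast
  next
    assume P: "0 < - rho N a p (int (ncls N a p) - 1)
                * (rho N a p 0 + rho N a p (int (ncls N a p) - 2))"
    define c where "c = sqrt (- rho N a p (int (ncls N a p) - 1)
                * (rho N a p 0 + rho N a p (int (ncls N a p) - 2)))"
    have c0: "c \<ge> 0"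
      and cc: "c^2 = - rho N a p (int (ncls N a p) - 1) * (rho N a p 0 + rho N a p (int (ncls N a p) - 2))"
      and cp: "0 < c^2"
      using P unfolding c_def by auto
    have G: "galset N a p c" unfolding galset_def using assms c0 by auto
    obtain l1 where l1: "l1 > c" "eigenvalue (galerkin_mat N a p) l1"
      using galset.case2[OF G cc cp] by blast
    obtain l2 where l2: "l2 > c" "eigenvalue (zeitlin_mat N a p) l2"
      using zeit_case2[OF N n3 hp c0 cc cp] by blast
    show "\<exists>l1 l2. l1 > sqrt (- rho N a p (int (ncls N a p) - 1)
                               * (rho N a p 0 + rho N a p (int (ncls N a p) - 2)))
                  \<and> l2 > sqrt (- rho N a p (int (ncls N a p) - 1)
                               * (rho N a p 0 + rho N a p (int (ncls N a p) - 2)))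
                  \<and> eigenvalue (galerkin_mat N a p) l1
                  \<and> eigenvalue (zeitlin_mat N a p) l2"
      using l1 l2 unfolding c_def by blast
  qed
qed

end
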